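(* Let $M$ be a Peano continuum with no cut points. Then: (1) every multivalent exact cut pair of $M$ is inseparable; (2) no cut pair of $M$ is separated by a multivalent exact cut pair, i.e., if $\{\sigma,\tau\}$ is a multivalent exact cut pair and $\{\zeta,\xi\}$ is any cut pair, then $\zeta$ and $\xi$ do not lie in distinct components of $M\setminus\{\sigma,\tau\}$.
   Context: A Peano continuum is a compact, connected, locally connected metrizable space. A cut point is $\eta$ with $M\setminus\{\eta\}$ disconnected. A cut pair is a set of two distinct points, neither a cut point, whose complement is disconnected. For a point $\zeta$ with $M\setminus\{\zeta\}$ connected, its valence is the number of ends of $M\setminus\{\zeta\}$. A cut pair $\{\zeta,\xi\}$ is exact if the valences of $\zeta$ and $\xi$ both equal $n$, where $n$ is the number of components of $M\setminus\{\zeta,\xi\}$; it is multivalent if this common valence is finite and at least $3$. An exact cut pair $\{\zeta,\xi\}$ is inseparable if $\zeta$ and $\xi$ do not lie in distinct components of the complement of any other exact cut pair. *)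

theory Defs
  imports "HOL-Analysis.Analysis" "HOL-Library.Extended_Nat"
begin

text \<open>A Peano continuum: a nonempty compact, connected, locally connected subset of a
metric space (metrizable spaces are exactly those homeomorphic to such subsets).\<close>
definition peano_continuum :: "'a::metric_space set \<Rightarrow> bool" where
  "peano_continuum M \<longleftrightarrow> M \<noteq> {} \<and> compact M \<and> connected M \<and> locally connected M"

definition cut_point :: "'a::metric_space set \<Rightarrow> 'a \<Rightarrow> bool" where
  "cut_point M \<eta> \<longleftrightarrow> \<eta> \<in> M \<and> \<not> connected (M - {\<eta>})"

definition cut_pair :: "'a::metric_space set \<Rightarrow> 'a \<Rightarrow> 'a \<Rightarrow> bool" where
  "cut_pair M \<zeta> \<xi> \<longleftrightarrow> \<zeta> \<in> M \<and> \<xi> \<in> M \<and> \<zeta> \<noteq> \<xi> \<and>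
     \<not> cut_point M \<zeta> \<and> \<not> cut_point M \<xi> \<and> \<not> connected (M - {\<zeta>, \<xi>})"

definition num_components :: "'a::topological_space set \<Rightarrow> enat" where
  "num_components S = (if finite (components S) then enat (card (components S)) else \<infinity>)"

definition num_ends :: "'a::metric_space set \<Rightarrow> enat" where
  "num_ends X = Sup {enat (card F) | K F. compact K \<and> K \<subseteq> X \<and> finite F \<and>
      F \<subseteq> {C \<in> components (X - K). \<not> compact (X \<inter> closure C)}}"

text \<open>Valence of a point \<zeta> (meaningful when M - {\<zeta>} is connected).\<close>
definition valence :: "'a::metric_space set \<Rightarrow> 'a \<Rightarrow> enat" where
  "valence M \<zeta> = num_ends (M - {\<zeta>})"

definition exact_cut_pair :: "'a::metric_space set \<Rightarrow> 'a \<Rightarrow> 'a \<Rightarrow> bool" where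
  "exact_cut_pair M \<zeta> \<xi> \<longleftrightarrow> cut_pair M \<zeta> \<xi> \<and>
     valence M \<zeta> = num_components (M - {\<zeta>, \<xi>}) \<and>
     valence M \<xi> = num_components (M - {\<zeta>, \<xi>})"

definition multivalent_exact_cut_pair :: "'a::metric_space set \<Rightarrow> 'a \<Rightarrow> 'a \<Rightarrow> bool" where
  "multivalent_exact_cut_pair M \<zeta> \<xi> \<longleftrightarrow> exact_cut_pair M \<zeta> \<xi> \<and>
     valence M \<zeta> \<noteq> \<infinity> \<and> valence M \<zeta> \<ge> 3"

definition separates :: "'a::metric_space set \<Rightarrow> 'a \<Rightarrow> 'a \<Rightarrow> 'a \<Rightarrow> 'a \<Rightarrow> bool" where
  "separates M \<sigma> \<tau> \<zeta> \<xi> \<longleftrightarrow> \<zeta> \<in> M - {\<sigma>, \<tau>} \<and> \<xi> \<in> M - {\<sigma>, \<tau>} \<and>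
     connected_component_set (M - {\<sigma>, \<tau>}) \<zeta> \<noteq> connected_component_set (M - {\<sigma>, \<tau>}) \<xi>"

definition inseparable :: "'a::metric_space set \<Rightarrow> 'a \<Rightarrow> 'a \<Rightarrow> bool" where
  "inseparable M \<zeta> \<xi> \<longleftrightarrow> exact_cut_pair M \<zeta> \<xi> \<and>
     (\<forall>\<sigma> \<tau>. exact_cut_pair M \<sigma> \<tau> \<and> {\<sigma>, \<tau>} \<noteq> {\<zeta>, \<xi>} \<longrightarrow> \<not> separates M \<sigma> \<tau> \<zeta> \<xi>)"

end

theory Submission
  imports Defs
begin

lemma clos_comp:
  assumes "C \<in> components S" "x \<in> closure C" "x \<in> S"
  shows "x \<in> C"
proof -
  obtain T where T: "closed T" "C = S \<inter> T"
    using closedin_component[OF assms(1)] by (auto simp: closedin_closed)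
  have "closure C \<subseteq> T" using T by (simp add: closure_minimal)
  thus ?thesis using assms T by auto
qed

lemma keyL:
  fixes M :: "'a::metric_space set"
  assumes lc: "locally connected M" and fK: "finite K" and KM: "K \<subseteq> M" and AK: "A \<subseteq> K"
    and cA: "connected (M - A)" and P: "P \<in> components (M - K)"
    and cl: "closure P \<inter> K \<subseteq> A" and q: "q \<in> K - A"
  shows False
proof -
  have oMK: "openin (top_of_set M) (M - K)"
    using fK KM by (intro openin_diff) (auto intro!: closed_subset finite_imp_closed)
  have oP: "openin (top_of_set M) P"
    using lc oMK P locally_connected_open_component by blast
  have PMK: "P \<subseteq> M - K" using P in_components_subset by blast
  have o2: "openin (top_of_set (M - A)) P"
    using oP PMK AK by (intro openin_subset_trans[OF oP]) auto
  have "P = (M - A) \<inter> closure P"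
  proof
    show "P \<subseteq> (M - A) \<inter> closure P" using PMK AK closure_subset by blast
  next
    show "(M - A) \<inter> closure P \<subseteq> P"
    proof
      fix x assume x: "x \<in> (M - A) \<inter> closure P"
      hence "x \<notin> K" using cl by auto
      thus "x \<in> P" using x clos_comp[OF P] by auto
    qed
  qed
  hence c2: "closedin (top_of_set (M - A)) P"
    by (metis closedin_closed closed_closure)
  have "P \<noteq> {}" using P in_components_nonempty by blast
  hence "P = M - A" using cA o2 c2 connected_clopen by blast
  thus False using q PMK KM by auto
qed

lemma lemB:
  fixes M :: "'a::metric_space set"
  assumes lc: "locally connected M" and nc: "\<And>x. connected (M - {x})"
    and ab: "a \<noteq> b" "a \<in> M" "b \<in> M" and D: "D \<in> components (M - {a, b})"
  shows "connected (D \<union> {a, b})"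
proof -
  have "a \<in> closure D"
  proof (rule ccontr)
    assume "a \<notin> closure D"
    thus False using keyL[OF lc _ _ _ nc D, of b a] ab by auto
  qed
  moreover have "b \<in> closure D"
  proof (rule ccontr)
    assume "b \<notin> closure D"
    thus False using keyL[OF lc _ _ _ nc, of "{a,b}" a D b] D ab by auto
  qed
  ultimately show ?thesis
    using connected_intermediate_closure[of D "D \<union> {a,b}"] D in_components_connected closure_subset
    by blast
qed


lemma part2:
  fixes M :: "'a::metric_space set"
  assumes lc: "locally connected M" and nc: "\<And>x. connected (M - {x})"
    and mv: "multivalent_exact_cut_pair M \<sigma> \<tau>" and cp: "cut_pair M \<zeta> \<xi>"
    and sep: "separates M \<sigma> \<tau> \<zeta> \<xi>"
  shows False
proof -
  define S where "S = M - {\<sigma>, \<tau>}"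
  define T where "T = M - {\<zeta>, \<xi>}"
  have st: "\<sigma> \<noteq> \<tau>" "\<sigma> \<in> M" "\<tau> \<in> M"
    using mv by (auto simp: multivalent_exact_cut_pair_def exact_cut_pair_def cut_pair_def)
  have zx: "\<zeta> \<in> S" "\<xi> \<in> S" and C12: "connected_component_set S \<zeta> \<noteq> connected_component_set S \<xi>"
    using sep by (auto simp: separates_def S_def)
  have v: "valence M \<sigma> = num_components S" "valence M \<sigma> \<noteq> \<infinity>" "valence M \<sigma> \<ge> 3"
    using mv unfolding multivalent_exact_cut_pair_def exact_cut_pair_def S_def by blast+
  have v2: "num_components S \<noteq> \<infinity>" "num_components S \<ge> 3" using v by auto
  hence fin: "finite (components S)" using num_components_def by (metis (full_types))
  hence c3: "card (components S) \<ge> 3" using v2 by (simp add: num_components_def)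
  obtain C3 where C3: "C3 \<in> components S" "C3 \<noteq> connected_component_set S \<zeta>"
      "C3 \<noteq> connected_component_set S \<xi>"
  proof -
    have "\<not> components S \<subseteq> {connected_component_set S \<zeta>, connected_component_set S \<xi>}"
    proof
      assume "components S \<subseteq> {connected_component_set S \<zeta>, connected_component_set S \<xi>}"
      hence "card (components S) \<le> card {connected_component_set S \<zeta>, connected_component_set S \<xi>}"
        by (intro card_mono) auto
      also have "\<dots> \<le> 2" by (simp add: card_insert_le_m1)
      finally show False using c3 by simp
    qed
    thus ?thesis using that by blast
  qed
  have notin3: "y \<notin> C3" if "y \<in> S" "C3 \<noteq> connected_component_set S y" for y
    using that C3(1) by (metis components_iff connected_component_eq)
  have B: "connected (C3 \<union> {\<sigma>, \<tau>})"
    using lemB[OF lc nc st] C3 S_def by blast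
  have BT: "C3 \<union> {\<sigma>, \<tau>} \<subseteq> T"
    using notin3[OF zx(1)] notin3[OF zx(2)] C3 in_components_subset[OF C3(1)] zx st
    unfolding T_def S_def by auto
  have sT: "\<sigma> \<in> T" "\<tau> \<in> T" using BT by auto
  have tau: "\<tau> \<in> connected_component_set T \<sigma>"
    using connected_component_maximal[OF _ B BT, of \<sigma>] by auto
  have all: "x \<in> connected_component_set T \<sigma>" if x: "x \<in> T" for x
  proof (cases "x \<in> {\<sigma>, \<tau>}")
    case True thus ?thesis using tau sT by auto
  next
    case False
    define K where "K = {\<sigma>, \<tau>, \<zeta>, \<xi>}"
    define P where "P = connected_component_set (M - K) x"
    have xMK: "x \<in> M - K" using x False by (auto simp: K_def T_def)
    have P: "P \<in> components (M - K)" using xMK by (simp add: P_def componentsI)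
    have Pc: "connected P" and xP: "x \<in> P" and PMK: "P \<subseteq> M - K"
      using P xMK by (auto simp: P_def in_components_connected in_components_subset)
    have PT: "P \<subseteq> T" using PMK by (auto simp: K_def T_def)
    show ?thesis
    proof (cases "\<sigma> \<in> closure P \<or> \<tau> \<in> closure P")
      case True
      then obtain w where w: "w \<in> {\<sigma>, \<tau>}" "w \<in> closure P" by auto
      have "connected (P \<union> {w})"
        using connected_intermediate_closure[OF Pc, of "P \<union> {w}"] w closure_subset by blast
      moreover have "P \<union> {w} \<subseteq> T" using PT w sT by auto
      ultimately have "x \<in> connected_component_set T w"
        using connected_component_maximal[of w "P \<union> {w}" T] xP by auto
      moreover have "connected_component_set T w = connected_component_set T \<sigma>"
        using w tau connected_component_eq sT by (metis connected_component_refl empty_iff insert_iff)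
      ultimately show ?thesis by simp
    next
      case False
      define C where "C = connected_component_set S x"
      have C: "C \<in> components S" using xMK by (auto simp: C_def S_def K_def componentsI)
      have "P \<subseteq> S" using PMK by (auto simp: S_def K_def)
      hence "P \<subseteq> C" unfolding C_def by (rule connected_component_maximal[OF xP Pc])
      hence clPC: "closure P \<subseteq> closure C" by (rule closure_mono)
      have "\<not> (\<zeta> \<in> closure P \<and> \<xi> \<in> closure P)"
      proof
        assume "\<zeta> \<in> closure P \<and> \<xi> \<in> closure P"
        hence "\<zeta> \<in> C" "\<xi> \<in> C" using clos_comp[OF C] clPC zx by auto
        thus False using C12 unfolding C_def by (metis connected_component_eq)
      qed
      then obtain A q where Aq: "A = {\<zeta>} \<or> A = {\<xi>}" "closure P \<inter> K \<subseteq> A" "q = \<sigma>"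
        using False unfolding K_def by auto
      have "q \<in> K - A" using Aq zx by (auto simp: K_def S_def)
      moreover have "A \<subseteq> K" "connected (M - A)" using Aq nc by (auto simp: K_def)
      moreover have "finite K" "K \<subseteq> M" using zx st by (auto simp: K_def S_def)
      ultimately show ?thesis using keyL[OF lc _ _ _ _ P Aq(2)] by blast
    qed
  qed
  hence "T = connected_component_set T \<sigma>" using connected_component_subset by blast
  hence "connected T" by (metis connected_connected_component)
  thus False using cp by (simp add: cut_pair_def T_def)
qed

lemma swap_sep:
  fixes M :: "'a::metric_space set"
  assumes lc: "locally connected M" and nc: "\<And>x. connected (M - {x})"
    and cpz: "cut_pair M \<zeta> \<xi>" and cps: "cut_pair M \<sigma> \<tau>"
    and sep: "separates M \<sigma> \<tau> \<zeta> \<xi>"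
  shows "separates M \<zeta> \<xi> \<sigma> \<tau>"
proof -
  define S where "S = M - {\<zeta>, \<xi>}"
  have zx: "\<zeta> \<noteq> \<xi>" "\<zeta> \<in> M" "\<xi> \<in> M" using cpz by (auto simp: cut_pair_def)
  have sS: "\<sigma> \<in> S" "\<tau> \<in> S" using sep cps by (auto simp: separates_def cut_pair_def S_def)
  have ncS: "\<not> connected S" using cpz by (simp add: cut_pair_def S_def)
  have C12: "connected_component_set (M - {\<sigma>, \<tau>}) \<zeta> \<noteq> connected_component_set (M - {\<sigma>, \<tau>}) \<xi>"
    and zxS: "\<zeta> \<in> M - {\<sigma>, \<tau>}" "\<xi> \<in> M - {\<sigma>, \<tau>}"
    using sep by (auto simp: separates_def)
  have "connected_component_set S \<sigma> \<noteq> connected_component_set S \<tau>"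
  proof
    assume eq: "connected_component_set S \<sigma> = connected_component_set S \<tau>"
    obtain y where y: "y \<in> S" "y \<notin> connected_component_set S \<sigma>"
      using ncS connected_connected_component connected_component_subset
      by (metis subsetI subset_antisym)
    define D where "D = connected_component_set S y"
    have D: "D \<in> components S" using y by (simp add: D_def componentsI)
    have yy: "y \<in> D" using y by (simp add: D_def)
    have "\<sigma> \<notin> D"
    proof
      assume "\<sigma> \<in> D"
      hence "connected_component_set S \<sigma> = D" unfolding D_def by (rule connected_component_eq)
      thus False using y yy by simp
    qed
    moreover have "\<tau> \<notin> D"
    proof
      assume "\<tau> \<in> D"
      hence "connected_component_set S \<tau> = D" unfolding D_def by (rule connected_component_eq)
      thus False using y yy eq by simp
    qed
    moreover have "connected (D \<union> {\<zeta>, \<xi>})" using lemB[OF lc nc zx] D S_def by blast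
    moreover have "D \<union> {\<zeta>, \<xi>} \<subseteq> M - {\<sigma>, \<tau>}"
      using calculation(1,2) D in_components_subset zxS unfolding S_def by auto
    ultimately have "\<xi> \<in> connected_component_set (M - {\<sigma>, \<tau>}) \<zeta>"
      using connected_component_maximal[of \<zeta> "D \<union> {\<zeta>, \<xi>}"] by auto
    thus False using C12 by (metis connected_component_eq)
  qed
  thus ?thesis using sS by (simp add: separates_def S_def)
qed

theorem lemma2p6:
  fixes M :: "'a::metric_space set"
  assumes "peano_continuum M"
    and "\<forall>\<eta>. \<not> cut_point M \<eta>"
  shows "(\<forall>\<zeta> \<xi>. multivalent_exact_cut_pair M \<zeta> \<xi> \<longrightarrow> inseparable M \<zeta> \<xi>)
       \<and> (\<forall>\<sigma> \<tau> \<zeta> \<xi>. multivalent_exact_cut_pair M \<sigma> \<tau> \<and> cut_pair M \<zeta> \<xi>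
            \<longrightarrow> \<not> separates M \<sigma> \<tau> \<zeta> \<xi>)"
proof -
  have lc: "locally connected M" and cM: "connected M"
    using assms(1) by (auto simp: peano_continuum_def)
  have nc: "connected (M - {x})" for x
  proof (cases "x \<in> M")
    case True thus ?thesis using assms(2) by (auto simp: cut_point_def)
  next
    case False thus ?thesis using cM by simp
  qed
  have P2: "\<forall>\<sigma> \<tau> \<zeta> \<xi>. multivalent_exact_cut_pair M \<sigma> \<tau> \<and> cut_pair M \<zeta> \<xi>
            \<longrightarrow> \<not> separates M \<sigma> \<tau> \<zeta> \<xi>"
    using part2[OF lc nc] by blast
  moreover have "\<forall>\<zeta> \<xi>. multivalent_exact_cut_pair M \<zeta> \<xi> \<longrightarrow> inseparable M \<zeta> \<xi>"
  proof (intro allI impI)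
    fix \<zeta> \<xi> assume mv: "multivalent_exact_cut_pair M \<zeta> \<xi>"
    hence ex: "exact_cut_pair M \<zeta> \<xi>" and cpz: "cut_pair M \<zeta> \<xi>"
      by (auto simp: multivalent_exact_cut_pair_def exact_cut_pair_def)
    show "inseparable M \<zeta> \<xi>" unfolding inseparable_def
    proof (intro conjI ex allI impI notI)
      fix \<sigma> \<tau> assume h: "exact_cut_pair M \<sigma> \<tau> \<and> {\<sigma>, \<tau>} \<noteq> {\<zeta>, \<xi>}"
        and s: "separates M \<sigma> \<tau> \<zeta> \<xi>"
      have cps: "cut_pair M \<sigma> \<tau>" using h by (simp add: exact_cut_pair_def)
      have "separates M \<zeta> \<xi> \<sigma> \<tau>" using swap_sep[OF lc nc cpz cps s] .
      thus False using P2 mv cps by blast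
    qed
  qed
  ultimately show ?thesis by blast
qed

end
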